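(* Let $m\ge4$ be an integer and $d=\lfloor m/2\rfloor$. For $0\le i\le d$ let $m_i=\binom{2m}{2i}-\binom{2m}{2i-1}$ (with $\binom{2m}{-1}=0$) be the eigenvalue multiplicities of the folded Johnson graph $\overline{J}(2m,m)$. Then $m_i^2\ge m_{i-1}m_{i+1}$ for all $1\le i\le d-1$.
   Context: The folded Johnson graph $\overline{J}(2m,m)$ is the quotient of the Johnson graph $J(2m,m)$ (vertices the $m$-subsets of a $2m$-set, adjacent when they meet in $m-1$ elements) obtained by identifying each $m$-subset with its complement; it is distance-regular of diameter $\lfloor m/2\rfloor$, and in the standard ordering its eigenvalue multiplicities are $m_i=\binom{2m}{2i}-\binom{2m}{2i-1}$. *)

theory Defs
  imports Main
begin

definition fj_mult :: "nat \<Rightarrow> nat \<Rightarrow> int" where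
  "fj_mult m i = int ((2*m) choose (2*i)) - (if i = 0 then 0 else int ((2*m) choose (2*i - 1)))"

end

theory Submission
  imports Defs
begin

lemma chooseL: "int (n choose Suc t) * (int t + 1) = int (n choose t) * (int n - int t)"
proof -
  have "Suc n * (n choose t) = (Suc n choose Suc t) * Suc t" by (rule Suc_times_binomial_eq)
  hence "(int n + 1) * int (n choose t) = (int (n choose t) + int (n choose Suc t)) * (int t + 1)"
    by (metis binomial_Suc_Suc of_nat_Suc of_nat_add of_nat_mult add.commute)
  thus ?thesis by (simp add: algebra_simps)
qed

definition xx :: "nat \<Rightarrow> nat \<Rightarrow> int" where
  "xx N j = int (N choose j) * (int N - 2 * int j)"

lemma ident: "int (Suc n) * (int (n choose j) - (if j = 0 then 0 else int (n choose (j - 1))))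
   = xx (Suc n) j"
proof (cases j)
  case 0 thus ?thesis by (simp add: xx_def)
next
  case (Suc t)
  have e: "int (n choose Suc t) * (int t + 1) = int (n choose t) * (int n - int t)" by (rule chooseL)
  have "xx (Suc n) j = (int (n choose t) + int (n choose Suc t)) * (int n + 1 - 2 * int t - 2)"
    using Suc by (simp add: xx_def)
  also have "\<dots> = (int n + 1) * (int (n choose Suc t) - int (n choose t))
      - 2 * (int (n choose Suc t) * (int t + 1) - int (n choose t) * (int n - int t))"
    by (simp add: algebra_simps)
  also have "\<dots> = (int n + 1) * (int (n choose Suc t) - int (n choose t))" using e by simp
  finally show ?thesis using Suc by simp
qed

lemma binlc: "int (N choose Suc j)^2 \<ge> int (N choose j) * int (N choose Suc (Suc j))"
proof -
  define b0 where "b0 = int (N choose j)"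
  define b1 where "b1 = int (N choose Suc j)"
  define b2 where "b2 = int (N choose Suc (Suc j))"
  have e1: "b1 * (int j + 1) = b0 * (int N - int j)" unfolding b0_def b1_def by (rule chooseL)
  have e2: "b2 * (int j + 2) = b1 * (int N - int j - 1)" unfolding b1_def b2_def
    using chooseL[of N "Suc j"] by (simp add: algebra_simps)
  have nn: "b0 \<ge> 0" "b1 \<ge> 0" "b2 \<ge> 0" unfolding b0_def b1_def b2_def by auto
  show ?thesis
  proof (cases "Suc j \<le> N")
    case False
    hence "N choose Suc j = 0" by simp
    moreover have "N choose Suc (Suc j) = 0" using False by simp
    ultimately show ?thesis by (simp only:) simp
  next
    case True
    have "b0 * b2 * ((int j + 1) * (int j + 2)) = (b0 * (int j + 1)) * (b1 * (int N - int j - 1))"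
    proof -
      have "b0 * b2 * ((int j + 1) * (int j + 2)) = (b0 * (int j + 1)) * (b2 * (int j + 2))"
        by (simp add: algebra_simps)
      thus ?thesis using e2 by simp
    qed
    also have "\<dots> \<le> (b0 * (int j + 2)) * (b1 * (int N - int j))"
    proof -
      have "b0 * b1 \<ge> 0" using nn by simp
      moreover have "(int j + 1) * (int N - int j - 1) \<le> (int j + 2) * (int N - int j)"
        using True by (simp add: algebra_simps)
      ultimately have "(b0*b1) * ((int j + 1) * (int N - int j - 1)) \<le> (b0*b1) * ((int j + 2) * (int N - int j))"
        by (intro mult_left_mono)
      thus ?thesis by (simp add: algebra_simps)
    qed
    also have "\<dots> = b1^2 * ((int j + 1) * (int j + 2))"
    proof -
      have "(b0 * (int j + 2)) * (b1 * (int N - int j)) = ((int j + 2) * b1) * (b0 * (int N - int j))"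
        by (simp add: algebra_simps)
      also have "\<dots> = ((int j + 2) * b1) * (b1 * (int j + 1))" using e1 by simp
      finally show ?thesis by (simp add: algebra_simps power2_eq_square)
    qed
    finally have "b0 * b2 * ((int j + 1) * (int j + 2)) \<le> b1^2 * ((int j + 1) * (int j + 2))" .
    moreover have "(int j + 1) * (int j + 2) > 0" by simp
    ultimately have "b0 * b2 \<le> b1^2" by (rule mult_right_le_imp_le)
    thus ?thesis unfolding b0_def b1_def b2_def by simp
  qed
qed

lemma xlc:
  assumes "2 * j + 4 < N"
  shows "xx N (Suc j)^2 \<ge> xx N j * xx N (Suc (Suc j))"
proof -
  define u where "u = int N - 2 * int j - 2"
  have u3: "u \<ge> 3" using assms unfolding u_def by simp
  have "xx N j * xx N (Suc (Suc j)) = (int (N choose j) * int (N choose Suc (Suc j))) * ((u+2)*(u-2))"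
    unfolding xx_def u_def by (simp add: algebra_simps)
  also have "\<dots> \<le> int (N choose Suc j)^2 * u^2"
  proof (rule mult_mono)
    show "int (N choose j) * int (N choose Suc (Suc j)) \<le> int (N choose Suc j)^2" by (rule binlc)
    show "(u+2)*(u-2) \<le> u^2" by (simp add: algebra_simps power2_eq_square)
    show "0 \<le> int (N choose Suc j)^2" by simp
    show "0 \<le> (u+2)*(u-2)" using u3 by simp
  qed
  also have "\<dots> = xx N (Suc j)^2" unfolding xx_def u_def by (simp add: algebra_simps power2_eq_square)
  finally show ?thesis .
qed

lemma chain:
  fixes A B C D E :: int
  assumes "B > 0" "C > 0" "D > 0" "A \<ge> 0" "E \<ge> 0"
    and h1: "B^2 \<ge> A*C" and h2: "C^2 \<ge> B*D" and h3: "D^2 \<ge> C*E"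
  shows "C^2 \<ge> A*E"
proof -
  have "A*C*(C*E) \<le> B^2 * D^2"
    by (rule mult_mono) (use assms in auto)
  hence "C^2*(A*E) \<le> (B*D)^2" by (simp add: algebra_simps power2_eq_square)
  also have "\<dots> \<le> (C^2)^2"
    using h2 assms by (intro power_mono) auto
  finally have "C^2*(A*E) \<le> C^2 * C^2" by (simp add: power2_eq_square)
  moreover have "C^2 > 0" using assms by simp
  ultimately show ?thesis by (meson mult_left_le_imp_le)
qed

lemma xpos: "2 * j < N \<Longrightarrow> xx N j > 0"
  unfolding xx_def by (intro mult_pos_pos) auto

theorem corollary6:
  fixes m i :: nat
  assumes "m \<ge> 4"
    and "1 \<le> i" and "i \<le> m div 2 - 1"
  shows "(fj_mult m i)^2 \<ge> fj_mult m (i - 1) * fj_mult m (i + 1)"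
proof -
  define N where "N = Suc (2*m)"
  define j where "j = 2 * i - 2"
  have k: "2 * i + 2 \<le> m" using assms by linarith
  have fm: "int N * fj_mult m l = xx N (2*l)" for l
    unfolding N_def fj_mult_def using ident[of "2*m" "2*l"] by simp
  have ij: "2 * (i - 1) = j" "2 * i = Suc (Suc j)" "2 * (i+1) = Suc (Suc (Suc (Suc j)))"
    unfolding j_def using assms by auto
  have "xx N (Suc (Suc j))^2 \<ge> xx N j * xx N (Suc (Suc (Suc (Suc j))))"
  proof (rule chain)
    show "0 < xx N (Suc j)" "0 < xx N (Suc (Suc j))" "0 < xx N (Suc (Suc (Suc j)))"
      using k assms(2) unfolding N_def j_def by (auto intro!: xpos)
    show "0 \<le> xx N j" "0 \<le> xx N (Suc (Suc (Suc (Suc j))))"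
      using k assms(2) unfolding N_def j_def by (auto intro!: less_imp_le xpos)
    show "xx N j * xx N (Suc (Suc j)) \<le> (xx N (Suc j))\<^sup>2"
      "xx N (Suc j) * xx N (Suc (Suc (Suc j))) \<le> (xx N (Suc (Suc j)))\<^sup>2"
      "xx N (Suc (Suc j)) * xx N (Suc (Suc (Suc (Suc j)))) \<le> (xx N (Suc (Suc (Suc j))))\<^sup>2"
      using k assms(2) unfolding N_def j_def by (auto intro!: xlc)
  qed
  hence "(int N * fj_mult m i)^2 \<ge> (int N * fj_mult m (i-1)) * (int N * fj_mult m (i+1))"
    using fm ij by metis
  hence "int N ^2 * (fj_mult m (i-1) * fj_mult m (i+1)) \<le> int N^2 * (fj_mult m i)^2"
    by (simp add: algebra_simps power2_eq_square)
  moreover have "int N ^2 > 0" unfolding N_def by simp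
  ultimately show ?thesis by simp
qed

end
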